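(* Let $\gamma\in(0,1]$. Let $E$ be an e-value for a null hypothesis (nonnegative with $\mathbb E[E]\le1$ under the null), $F$ a nonnegative random variable, and $\hat\alpha\in[0,1]$ a data-dependent threshold, all mutually arbitrarily dependent. Let $U\sim\mathrm{Uniform}[0,1]$ be independent of $(E,F,\hat\alpha)$, let $T:=\mathbf 1\{U\le(1-\gamma F^{-1})_+\}$, and define $$\tilde E^{\mathrm{SR}}:=(1-T)F+T\cdot\frac{1-\gamma}{(1-\gamma F^{-1})_+}\cdot E,\qquad \tilde E:=(1-T)F+T(1-\gamma)E.$$ Then $T_{\hat\alpha}(\tilde E^{\mathrm{SR}}):=\hat\alpha^{-1}\mathbf 1\{\tilde E^{\mathrm{SR}}\ge\hat\alpha^{-1}\}$ is an e-value (its expectation under the null is at most $1$), and $\tilde E^{\mathrm{SR}}\ge\tilde E$ almost surely.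
   Context: $x_+=\max(x,0)$, with $(1-\gamma F^{-1})_+=0$ when $F=0$. On the event $T=1$, $(1-\gamma F^{-1})_+>0$ almost surely, so $\tilde E^{\mathrm{SR}}$ is well defined almost surely (the second term is taken as $0$ when $T=0$). *)

theory Defs
  imports "HOL-Probability.Probability"
begin

definition e_value :: "'a measure \<Rightarrow> ('a \<Rightarrow> real) \<Rightarrow> bool" where
  "e_value M X \<longleftrightarrow> X \<in> borel_measurable M \<and> (\<forall>x\<in>space M. 0 \<le> X x)
     \<and> (\<integral>\<^sup>+ x. ennreal (X x) \<partial>M) \<le> 1"

definition pos_part_gam :: "real \<Rightarrow> real \<Rightarrow> real" where
  "pos_part_gam \<gamma> f = (if f = 0 then 0 else max (1 - \<gamma> / f) 0)"

definition T_ind :: "real \<Rightarrow> real \<Rightarrow> real \<Rightarrow> real" where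
  "T_ind \<gamma> u f = (if u \<le> pos_part_gam \<gamma> f then 1 else 0)"

definition E_SR :: "real \<Rightarrow> real \<Rightarrow> real \<Rightarrow> real \<Rightarrow> real" where
  "E_SR \<gamma> u f e = (1 - T_ind \<gamma> u f) * f
     + (if T_ind \<gamma> u f = 1 then (1 - \<gamma>) / pos_part_gam \<gamma> f * e else 0)"

definition E_tilde :: "real \<Rightarrow> real \<Rightarrow> real \<Rightarrow> real \<Rightarrow> real" where
  "E_tilde \<gamma> u f e = (1 - T_ind \<gamma> u f) * f + T_ind \<gamma> u f * (1 - \<gamma>) * e"

text \<open>T_alpha(x) = alpha^{-1} 1{x >= alpha^{-1}}; equal to 0 when alpha = 0 (alpha^{-1} = infinity).\<close>
definition T_alpha :: "real \<Rightarrow> real \<Rightarrow> real" where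
  "T_alpha a x = (if a = 0 then 0 else if x \<ge> 1 / a then 1 / a else 0)"

end

theory Submission
  imports Defs
begin

lemma pg_meas[measurable (raw)]: assumes [measurable]: "f \<in> borel_measurable M" shows "(\<lambda>x. pos_part_gam \<gamma> (f x)) \<in> borel_measurable M"
  unfolding pos_part_gam_def by measurable
lemma Ta_meas[measurable (raw)]: assumes [measurable]: "f \<in> borel_measurable M" "g \<in> borel_measurable M" shows "(\<lambda>x. T_alpha (f x) (g x)) \<in> borel_measurable M"
  unfolding T_alpha_def by measurable
lemma ESR_alt: "E_SR \<gamma> u f e = (if u \<le> pos_part_gam \<gamma> f then (1 - \<gamma>) / pos_part_gam \<gamma> f * e else f)"
  unfolding E_SR_def T_ind_def by auto
lemma ESR_meas[measurable (raw)]: assumes [measurable]: "u \<in> borel_measurable M" "f \<in> borel_measurable M" "e \<in> borel_measurable M" shows "(\<lambda>x. E_SR \<gamma> (u x) (f x) (e x)) \<in> borel_measurable M"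
  unfolding ESR_alt by measurable
lemma g_meas: "(\<lambda>z::real \<times> real \<times> real \<times> real. ennreal (T_alpha (snd (snd (snd z))) (E_SR \<gamma> (fst z) (fst (snd (snd z))) (fst (snd z)))))
   \<in> borel_measurable (borel \<Otimes>\<^sub>M (borel \<Otimes>\<^sub>M (borel \<Otimes>\<^sub>M borel)))"
  by measurable
lemma real_ineq:
  fixes e f a \<gamma> :: real
  assumes "0 \<le> e" "0 \<le> f" "0 \<le> a" "a \<le> 1" "0 < \<gamma>" "\<gamma> \<le> 1"
  shows "pos_part_gam \<gamma> f * T_alpha a ((1-\<gamma>)/pos_part_gam \<gamma> f * e)
     + (1 - pos_part_gam \<gamma> f) * T_alpha a f \<le> \<gamma> + (1-\<gamma>)*e"
proof -
  define p where "p = pos_part_gam \<gamma> f"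
  have p0: "0 \<le> p" and p1: "p \<le> 1" using assms unfolding p_def pos_part_gam_def by auto
  have A: "p * T_alpha a ((1-\<gamma>)/p * e) \<le> (1-\<gamma>)*e"
  proof (cases "a = 0 \<or> p = 0 \<or> (1-\<gamma>)/p * e < 1/a")
    case True then show ?thesis using assms p0 unfolding T_alpha_def by auto
  next
    case False
    then have "a > 0" "p > 0" "(1-\<gamma>)/p * e \<ge> 1/a" using assms p0 by auto
    then have "p * (1/a) \<le> p * ((1-\<gamma>)/p * e)" by (intro mult_left_mono) auto
    then show ?thesis using \<open>a>0\<close> \<open>p>0\<close> \<open>(1-\<gamma>)/p * e \<ge> 1/a\<close> unfolding T_alpha_def by auto
  qed
  have B: "(1 - p) * T_alpha a f \<le> \<gamma>"
  proof (cases "a = 0 \<or> f < 1/a")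
    case True then show ?thesis using assms p1 unfolding T_alpha_def by auto
  next
    case False
    then have a: "a > 0" "f \<ge> 1/a" using assms by auto
    have "1/a \<ge> 1" using a assms by (simp add: field_simps)
    then have f1: "f \<ge> 1" using a by linarith
    then have "p = 1 - \<gamma>/f" using assms unfolding p_def pos_part_gam_def by (auto simp: field_simps)
    then have "(1-p) * T_alpha a f = \<gamma>/f * (1/a)" using a unfolding T_alpha_def by auto
    also have "\<dots> \<le> \<gamma>/f * f" using a assms f1 by (intro mult_left_mono) auto
    also have "\<dots> = \<gamma>" using f1 by auto
    finally show ?thesis .
  qed
  show ?thesis using A B unfolding p_def by linarith
qed

lemma inner_bound:
  fixes e f a \<gamma> :: real
  assumes "0 \<le> e" "0 \<le> f" "0 \<le> a" "a \<le> 1" "0 < \<gamma>" "\<gamma> \<le> 1"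
  shows "(\<integral>\<^sup>+ u. ennreal (T_alpha a (E_SR \<gamma> u f e)) \<partial>uniform_measure lborel {0..1})
     \<le> ennreal (\<gamma> + (1-\<gamma>)*e)"
proof -
  define p where "p = pos_part_gam \<gamma> f"
  have p0: "0 \<le> p" and p1: "p \<le> 1" using assms unfolding p_def pos_part_gam_def by auto
  define A where "A = T_alpha a ((1-\<gamma>)/p * e)"
  define B where "B = T_alpha a f"
  have A0: "A \<ge> 0" and B0: "B \<ge> 0" using assms unfolding A_def B_def T_alpha_def by auto
  have pw: "ennreal (T_alpha a (E_SR \<gamma> u f e)) = ennreal A * indicator {..p} u + ennreal B * indicator {p<..} u" for u
    unfolding E_SR_def T_ind_def A_def B_def p_def[symmetric] by (auto simp: indicator_def)
  have "(\<integral>\<^sup>+ u. ennreal (T_alpha a (E_SR \<gamma> u f e)) \<partial>uniform_measure lborel {0..1})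
     = (\<integral>\<^sup>+ u. ennreal A * indicator {..p} u \<partial>uniform_measure lborel {0..1})
       + (\<integral>\<^sup>+ u. ennreal B * indicator {p<..} u \<partial>uniform_measure lborel {0..1})"
    unfolding pw by (rule nn_integral_add) auto
  also have "\<dots> = ennreal A * ennreal p + ennreal B * ennreal (1 - p)"
  proof -
    have "{0..1} \<inter> {..p} = {0..p::real}" "{0..1} \<inter> {p<..} = {p<..1::real}" using p0 p1 by auto
    then show ?thesis using p0 p1
      by (simp add: nn_integral_cmult_indicator divide_ennreal_def)
  qed
  also have "\<dots> = ennreal (p * A + (1-p) * B)"
    using A0 B0 p0 p1 by (simp add: ennreal_mult' ennreal_plus[symmetric] mult.commute)
  also have "\<dots> \<le> ennreal (\<gamma> + (1-\<gamma>)*e)"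
    using real_ineq[OF assms] unfolding A_def B_def p_def by (intro ennreal_leI) auto
  finally show ?thesis .
qed


lemma pointwise_ge:
  fixes e f u \<gamma> :: real
  assumes "0 \<le> e" "0 \<le> f" "0 < u" "0 < \<gamma>" "\<gamma> \<le> 1"
  shows "E_tilde \<gamma> u f e \<le> E_SR \<gamma> u f e"
proof (cases "u \<le> pos_part_gam \<gamma> f")
  case True
  define p where "p = pos_part_gam \<gamma> f"
  have p0: "0 < p" and p1: "p \<le> 1" using assms True unfolding p_def pos_part_gam_def by auto
  have "(1-\<gamma>) * e = ((1-\<gamma>)/p*e) * p" using p0 by auto
  also have "\<dots> \<le> ((1-\<gamma>)/p*e) * 1" using p0 p1 assms by (intro mult_left_mono) auto
  finally show ?thesis using True unfolding ESR_alt E_tilde_def T_ind_def p_def[symmetric] by auto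
next
  case False
  then show ?thesis unfolding ESR_alt E_tilde_def T_ind_def by auto
qed

theorem proposition9:
  fixes M :: "'a measure" and E F alpha U :: "'a \<Rightarrow> real" and \<gamma> :: real
  assumes "prob_space M"
    and "0 < \<gamma>" and "\<gamma> \<le> 1"
    and "e_value M E"
    and "F \<in> borel_measurable M" and "\<forall>x\<in>space M. 0 \<le> F x"
    and "alpha \<in> borel_measurable M" and "\<forall>x\<in>space M. 0 \<le> alpha x \<and> alpha x \<le> 1"
    and "U \<in> borel_measurable M"
    and "distr M lborel U = uniform_measure lborel {0..1}"
    and "prob_space.indep_set M
           (sigma_sets (space M) {U -` A \<inter> space M | A. A \<in> sets (borel :: real measure)})
           (sigma_sets (space M) {(\<lambda>x. (E x, F x, alpha x)) -` B \<inter> space M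
              | B. B \<in> sets (borel :: (real \<times> real \<times> real) measure)})"
  shows "e_value M (\<lambda>x. T_alpha (alpha x) (E_SR \<gamma> (U x) (F x) (E x)))
    \<and> (AE x in M. E_SR \<gamma> (U x) (F x) (E x) \<ge> E_tilde \<gamma> (U x) (F x) (E x))"
proof -
  interpret prob_space M by fact
  note [measurable] = assms(5,7,9)
  have Em[measurable]: "E \<in> borel_measurable M" and E0: "\<forall>x\<in>space M. 0 \<le> E x"
    and Eint: "(\<integral>\<^sup>+ x. ennreal (E x) \<partial>M) \<le> 1"
    using assms(4) unfolding e_value_def by auto
  define V where "V = (\<lambda>x. (E x, F x, alpha x))"
  have Vm[measurable]: "V \<in> borel_measurable M" unfolding V_def by measurable
  define Ud where "Ud = distr M borel U"
  have Ud_eq: "Ud = uniform_measure lborel {0..1}"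
    unfolding Ud_def assms(10)[symmetric] by (rule distr_cong) auto
  interpret Ud: prob_space Ud unfolding Ud_def by (rule prob_space_distr) measurable
  let ?A = "sigma_sets (space M) {U -` A \<inter> space M | A. A \<in> sets (borel :: real measure)}"
  let ?B = "sigma_sets (space M) {V -` A \<inter> space M | A. A \<in> sets (borel :: (real \<times> real \<times> real) measure)}"
  have ind: "indep_set ?A ?B" using assms(11) unfolding V_def .
  have ind2: "\<And>a b. a \<in> ?A \<Longrightarrow> b \<in> ?B \<Longrightarrow> prob (a \<inter> b) = prob a * prob b"
    using ind unfolding indep_sets2_eq by blast
  have dist: "distr M borel V \<Otimes>\<^sub>M Ud = distr M (borel \<Otimes>\<^sub>M borel) (\<lambda>x. (V x, U x))"
  proof (rule pair_measure_eqI)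
    show "sigma_finite_measure (distr M borel V)"
      by (rule prob_space_imp_sigma_finite, rule prob_space_distr) simp
    show "sigma_finite_measure Ud"
      by (rule prob_space_imp_sigma_finite) (rule Ud.prob_space_axioms)
    show "sets (distr M borel V \<Otimes>\<^sub>M Ud) = sets (distr M (borel \<Otimes>\<^sub>M borel) (\<lambda>x. (V x, U x)))"
      unfolding Ud_def sets_distr by (rule sets_pair_measure_cong) simp_all
  next
    fix A B assume A: "A \<in> sets (distr M borel V)" and B: "B \<in> sets Ud"
    then have A': "A \<in> sets (borel :: (real \<times> real \<times> real) measure)" and B': "B \<in> sets (borel :: real measure)"
      unfolding Ud_def by auto
    have ia: "U -` B \<inter> space M \<in> ?A" by (rule sigma_sets.Basic) (use B' in blast)
    have ib: "V -` A \<inter> space M \<in> ?B" by (rule sigma_sets.Basic) (use A' in blast)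
    have ev1: "U -` B \<inter> space M \<in> events" using B' by measurable
    have ev2: "V -` A \<inter> space M \<in> events" using A' by measurable
    have eq: "(\<lambda>x. (V x, U x)) -` (A \<times> B) \<inter> space M = (U -` B \<inter> space M) \<inter> (V -` A \<inter> space M)"
      by auto
    have "emeasure (distr M (borel \<Otimes>\<^sub>M borel) (\<lambda>x. (V x, U x))) (A \<times> B)
        = emeasure M ((U -` B \<inter> space M) \<inter> (V -` A \<inter> space M))"
      using A' B' by (subst emeasure_distr) (auto simp: eq)
    also have "\<dots> = ennreal (prob (U -` B \<inter> space M) * prob (V -` A \<inter> space M))"
      using ind2[OF ia ib] by (simp add: emeasure_eq_measure)
    also have "\<dots> = emeasure (distr M borel V) A * emeasure Ud B"
      using A' B' unfolding Ud_def
      by (simp add: emeasure_distr emeasure_eq_measure ennreal_mult measure_nonneg mult.commute)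
    finally show "emeasure (distr M borel V) A * emeasure Ud B
        = emeasure (distr M (borel \<Otimes>\<^sub>M borel) (\<lambda>x. (V x, U x))) (A \<times> B)" by simp
  qed
  define h where "h = (\<lambda>z::(real \<times> real \<times> real) \<times> real.
     ennreal (T_alpha (snd (snd (fst z))) (E_SR \<gamma> (snd z) (fst (snd (fst z))) (fst (fst z)))))"
  have b3: "(borel :: (real \<times> real \<times> real) measure) = borel \<Otimes>\<^sub>M (borel \<Otimes>\<^sub>M borel)"
    by (simp add: borel_prod)
  have hm0: "h \<in> borel_measurable ((borel \<Otimes>\<^sub>M (borel \<Otimes>\<^sub>M borel)) \<Otimes>\<^sub>M borel)"
    unfolding h_def by measurable
  have hm: "h \<in> borel_measurable (borel \<Otimes>\<^sub>M borel)"
    using hm0 unfolding b3 .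
  have hm2: "h \<in> borel_measurable (distr M borel V \<Otimes>\<^sub>M Ud)"
  proof -
    have sX: "sets (distr M borel V \<Otimes>\<^sub>M Ud) = sets (borel \<Otimes>\<^sub>M borel)"
      unfolding Ud_def by (rule sets_pair_measure_cong) simp_all
    show ?thesis unfolding measurable_cong_sets[OF sX refl] by (rule hm)
  qed
  have hm3: "h \<in> borel_measurable (distr M (borel \<Otimes>\<^sub>M borel) (\<lambda>x. (V x, U x)))"
  proof -
    have sX: "sets (distr M (borel \<Otimes>\<^sub>M borel) (\<lambda>x. (V x, U x))) = sets (borel \<Otimes>\<^sub>M borel)"
      by simp
    show ?thesis unfolding measurable_cong_sets[OF sX refl] by (rule hm)
  qed
  have inner_m: "(\<lambda>v. \<integral>\<^sup>+ u. h (v, u) \<partial>Ud) \<in> borel_measurable (distr M borel V)"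
    by (rule Ud.borel_measurable_nn_integral_fst[OF hm2])
  have "(\<integral>\<^sup>+ x. ennreal (T_alpha (alpha x) (E_SR \<gamma> (U x) (F x) (E x))) \<partial>M)
      = (\<integral>\<^sup>+ x. h (V x, U x) \<partial>M)" unfolding h_def V_def by simp
  also have "\<dots> = (\<integral>\<^sup>+ z. h z \<partial>distr M (borel \<Otimes>\<^sub>M borel) (\<lambda>x. (V x, U x)))"
    by (rule nn_integral_distr[OF _ hm3, symmetric]) measurable
  also have "\<dots> = (\<integral>\<^sup>+ z. h z \<partial>(distr M borel V \<Otimes>\<^sub>M Ud))"
    unfolding dist ..
  also have "\<dots> = (\<integral>\<^sup>+ v. (\<integral>\<^sup>+ u. h (v, u) \<partial>Ud) \<partial>distr M borel V)"
    by (rule Ud.nn_integral_fst[OF hm2, symmetric])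
  also have "\<dots> = (\<integral>\<^sup>+ x. (\<integral>\<^sup>+ u. h (V x, u) \<partial>Ud) \<partial>M)"
    by (rule nn_integral_distr[OF Vm inner_m])
  also have "\<dots> \<le> (\<integral>\<^sup>+ x. ennreal (\<gamma> + (1-\<gamma>) * E x) \<partial>M)"
  proof (rule nn_integral_mono)
    fix x assume x: "x \<in> space M"
    show "(\<integral>\<^sup>+ u. h (V x, u) \<partial>Ud) \<le> ennreal (\<gamma> + (1-\<gamma>) * E x)"
      unfolding Ud_eq h_def V_def fst_conv snd_conv using x assms(2,3,6,8) E0
      by (intro inner_bound) auto
  qed
  also have "\<dots> = (\<integral>\<^sup>+ x. ennreal \<gamma> + ennreal (1-\<gamma>) * ennreal (E x) \<partial>M)"
  proof (rule nn_integral_cong)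
    fix x assume "x \<in> space M"
    then have "0 \<le> E x" using E0 by auto
    then show "ennreal (\<gamma> + (1-\<gamma>) * E x) = ennreal \<gamma> + ennreal (1-\<gamma>) * ennreal (E x)"
      using assms(2,3) by (simp add: ennreal_plus ennreal_mult)
  qed
  also have "\<dots> = (\<integral>\<^sup>+ x. ennreal \<gamma> \<partial>M) + (\<integral>\<^sup>+ x. ennreal (1-\<gamma>) * ennreal (E x) \<partial>M)"
    by (rule nn_integral_add) measurable
  also have "(\<integral>\<^sup>+ x. ennreal (1-\<gamma>) * ennreal (E x) \<partial>M) = ennreal (1-\<gamma>) * (\<integral>\<^sup>+ x. ennreal (E x) \<partial>M)"
    by (rule nn_integral_cmult) measurable
  also have "(\<integral>\<^sup>+ x. ennreal \<gamma> \<partial>M) = ennreal \<gamma>"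
    by (simp add: emeasure_space_1)
  also have "ennreal \<gamma> + ennreal (1-\<gamma>) * (\<integral>\<^sup>+ x. ennreal (E x) \<partial>M) \<le> ennreal \<gamma> + ennreal (1-\<gamma>) * 1"
    using Eint by (intro add_left_mono mult_left_mono) auto
  also have "ennreal \<gamma> + ennreal (1-\<gamma>) * 1 = 1"
    using assms(2,3) ennreal_plus[of \<gamma> "1-\<gamma>"] by simp
  finally have int1: "(\<integral>\<^sup>+ x. ennreal (T_alpha (alpha x) (E_SR \<gamma> (U x) (F x) (E x))) \<partial>M) \<le> 1" .
  have ev: "e_value M (\<lambda>x. T_alpha (alpha x) (E_SR \<gamma> (U x) (F x) (E x)))"
  proof -
    have m: "(\<lambda>x. T_alpha (alpha x) (E_SR \<gamma> (U x) (F x) (E x))) \<in> borel_measurable M"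
      by measurable
    have n: "\<forall>x\<in>space M. 0 \<le> T_alpha (alpha x) (E_SR \<gamma> (U x) (F x) (E x))"
      using assms(8) by (simp add: T_alpha_def)
    show ?thesis unfolding e_value_def using m n int1 by blast
  qed
  have AEu: "AE u in Ud. 0 < u"
    unfolding Ud_eq
  proof (rule AE_uniform_measureI)
    show "{0..1::real} \<in> sets lborel" by simp
    show "AE x in lborel. x \<in> {0..1::real} \<longrightarrow> 0 < x"
      using AE_lborel_singleton[of "0::real"] by (rule AE_mp) (rule AE_I2, auto)
  qed
  have AEU: "AE x in M. 0 < U x"
    using assms(9) AEu unfolding Ud_def by (rule AE_distrD)
  have "AE x in M. E_SR \<gamma> (U x) (F x) (E x) \<ge> E_tilde \<gamma> (U x) (F x) (E x)"
    using AEU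
  proof (rule AE_mp)
    show "AE x in M. 0 < U x \<longrightarrow> E_tilde \<gamma> (U x) (F x) (E x) \<le> E_SR \<gamma> (U x) (F x) (E x)"
    proof (rule AE_I2, rule impI)
      fix x assume x: "x \<in> space M" and u: "0 < U x"
      show "E_tilde \<gamma> (U x) (F x) (E x) \<le> E_SR \<gamma> (U x) (F x) (E x)"
        using pointwise_ge[of "E x" "F x" "U x" \<gamma>] E0 assms(2,3,6) x u by auto
    qed
  qed
  with ev show ?thesis by blast
qed

end
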